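(* Fix $\lambda>0$ and let $M_\lambda(x)=E[v_{x,\lambda}]$ for $x\ge 0$, where $v_{x,\lambda}$ is the number of unit intervals at saturation in the exponential parking process on $(0,x)$ described in the context. Then $M_\lambda(x)=0$ for $0\le x\le 1$, and for all $x>0$, \[ M_{\lambda}(x+1)=\int_0^x\frac{\lambda e^{-\lambda t}}{1-e^{-\lambda x}}\bigl(M_{\lambda}(t)+M_{\lambda}(x-t)\bigr)\,dt+1 . \]
   Context: Exponential parking process: fix $\lambda>0$ and $x\ge 0$. Open unit intervals are placed one at a time in $(0,x)$. For each candidate, the left endpoint is drawn independently with density $f(t;\lambda,x)=\frac{\lambda e^{-\lambda t}}{1-e^{-\lambda(x-1)}}$ for $0<t<x-1$, and $0$ otherwise. A candidate that intersects a previously placed interval is discarded, and the procedure is repeated. The process stops at saturation, i.e. when no further open unit interval contained in $(0,x)$ can be placed disjoint from the ones already placed. The random variable $v_{x,\lambda}$ is the number of intervals present at saturation; $v_{x,\lambda}=0$ when $x\le 1$. *)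

theory Defs
  imports "HOL-Probability.Probability"
begin

text \<open>Density of the left endpoint of a candidate interval in the exponential
  parking process on (0,x) with rate l.\<close>
definition park_dens :: "real \<Rightarrow> real \<Rightarrow> real \<Rightarrow> real" where
  "park_dens l x t =
     (if 0 < t \<and> t < x - 1 then l * exp (- l * t) / (1 - exp (- l * (x - 1))) else 0)"

definition park_cand :: "real \<Rightarrow> real \<Rightarrow> real measure" where
  "park_cand l x = density lborel (\<lambda>t. ennreal (park_dens l x t))"

text \<open>Open unit intervals (s,s+1) and (t,t+1) are disjoint iff |s - t| >= 1.
  One step: the candidate with left endpoint t is kept iff it is disjoint from
  all placed intervals (given by their left endpoints).\<close>
definition park_step :: "real set \<Rightarrow> real \<Rightarrow> real set" where
  "park_step S t = (if \<forall>s\<in>S. \<bar>s - t\<bar> \<ge> 1 then insert t S else S)"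

fun park_placed :: "real stream \<Rightarrow> nat \<Rightarrow> real set" where
  "park_placed w 0 = {}"
| "park_placed w (Suc n) = park_step (park_placed w n) (w !! n)"

definition park_saturated :: "real \<Rightarrow> real set \<Rightarrow> bool" where
  "park_saturated x S \<longleftrightarrow>
     \<not> (\<exists>a. 0 \<le> a \<and> a + 1 \<le> x \<and> (\<forall>s\<in>S. \<bar>s - a\<bar> \<ge> 1))"

text \<open>Number of intervals at saturation (the process stops at the first
  saturated time); on the null event that saturation is never reached we
  put 0.  For x <= 1 the count is 0 by convention.\<close>
definition park_count :: "real \<Rightarrow> real stream \<Rightarrow> real" where
  "park_count x w =
     (if x \<le> 1 then 0
      else if \<exists>n. park_saturated x (park_placed w n)
      then real (card (park_placed w (LEAST n. park_saturated x (park_placed w n))))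
      else 0)"

definition park_M :: "real \<Rightarrow> real \<Rightarrow> real" where
  "park_M l x = (if x \<le> 1 then 0
                 else integral\<^sup>L (stream_space (park_cand l x)) (park_count x))"

end

theory Submission
  imports Defs
begin

definition AS :: "real set \<Rightarrow> real set" where "AS S = {a. \<forall>s\<in>S. 1 \<le> \<bar>s - a\<bar>}"

fun pp :: "real set \<Rightarrow> real stream \<Rightarrow> nat \<Rightarrow> real set" where
  "pp S w 0 = S"
| "pp S w (Suc n) = park_step (pp S w n) (w !! n)"

lemma park_placed_pp: "park_placed w n = pp {} w n"
  by (induct n) auto

lemma pp_Stream: "pp S (s ## w) (Suc n) = pp (park_step S s) w n"
  by (induct n) auto

definition acc :: "real set \<Rightarrow> real stream \<Rightarrow> nat \<Rightarrow> bool" where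
  "acc S w j = (\<forall>s\<in>pp S w j. 1 \<le> \<bar>s - w !! j\<bar>)"

lemma pp_Suc_acc: "pp S w (Suc n) = (if acc S w n then insert (w!!n) (pp S w n) else pp S w n)"
  by (simp add: acc_def park_step_def)

lemma pp_eq: "pp S w n = S \<union> {w!!j | j. j < n \<and> acc S w j}"
proof (induct n)
  case 0 then show ?case by simp
next
  case (Suc n)
  show ?case unfolding pp_Suc_acc Suc by (auto simp: less_Suc_eq)
qed

lemma acc_iff: "acc S w j \<longleftrightarrow> (\<forall>s\<in>S. 1 \<le> \<bar>s - w!!j\<bar>) \<and> (\<forall>i\<in>{..<j}. acc S w i \<longrightarrow> 1 \<le> \<bar>w!!i - w!!j\<bar>)"
  unfolding acc_def[of S w j] pp_eq by auto

lemma acc_meas: "finite S \<Longrightarrow> Measurable.pred (stream_space borel) (\<lambda>w. acc S w j)"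
proof (induct j rule: less_induct)
  case (less j)
  have "Measurable.pred (stream_space borel) (\<lambda>w. (\<forall>s\<in>S. 1 \<le> \<bar>s - w!!j\<bar>) \<and> (\<forall>i\<in>{..<j}. acc S w i \<longrightarrow> 1 \<le> \<bar>w!!i - w!!j\<bar>))"
    apply (intro pred_intros_logic pred_intros_countable_bounded)
    using less by (auto intro: countable_finite)
  then show ?case unfolding acc_iff[symmetric] .
qed

lemma finite_pp: "finite S \<Longrightarrow> finite (pp S w n)"
  by (induct n) (auto simp: park_step_def)

lemma acc_notin: "acc S w n \<Longrightarrow> w!!n \<notin> pp S w n"
  unfolding acc_def by force

lemma card_pp_Suc: "finite S \<Longrightarrow> card (pp S w (Suc n)) = card (pp S w n) + (if acc S w n then 1 else 0)"
  using acc_notin[of S w n] finite_pp[of S w n] unfolding pp_Suc_acc by (simp del: pp.simps)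

lemma card_pp_meas: "finite S \<Longrightarrow> (\<lambda>w. real (card (pp S w n))) \<in> borel_measurable (stream_space borel)"
proof (induct n)
  case 0 then show ?case by simp
next
  case (Suc n)
  have [measurable]: "Measurable.pred (stream_space borel) (\<lambda>w. acc S w n)" using acc_meas Suc by auto
  have "(\<lambda>w. real (card (pp S w n)) + (if acc S w n then 1 else 0)) \<in> borel_measurable (stream_space borel)"
    using Suc by measurable
  moreover have "(\<lambda>w. real (card (pp S w (Suc n)))) = (\<lambda>w. real (card (pp S w n)) + (if acc S w n then 1 else 0))"
    using card_pp_Suc[OF Suc(2)] by (auto simp del: pp.simps)
  ultimately show ?case by simp
qed

lemma sat_witness:
  assumes "finite T"
  shows "\<not> park_saturated X T \<longleftrightarrow> (\<exists>a\<in>insert 0 ((\<lambda>s. s+1) ` T). 0 \<le> a \<and> a+1 \<le> X \<and> (\<forall>s\<in>T. 1 \<le> \<bar>s-a\<bar>))"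
proof
  assume "\<not> park_saturated X T"
  then obtain a where a: "0 \<le> a" "a + 1 \<le> X" "\<forall>s\<in>T. 1 \<le> \<bar>s-a\<bar>" unfolding park_saturated_def by auto
  define B where "B = insert 0 {s+1 | s. s\<in>T \<and> s+1 \<le> a}"
  have fB: "finite B" unfolding B_def using assms by auto
  define a' where "a' = Max B"
  have a'B: "a' \<in> B" unfolding a'_def using fB B_def by (intro Max_in) auto
  have a'ge: "\<And>b. b \<in> B \<Longrightarrow> b \<le> a'" unfolding a'_def using fB by auto
  have "a' \<le> a" using a'B a unfolding B_def by auto
  have "0 \<le> a'" using a'ge[of 0] B_def by auto
  have "\<forall>s\<in>T. 1 \<le> \<bar>s-a'\<bar>"
  proof
    fix s assume s: "s \<in> T"
    show "1 \<le> \<bar>s-a'\<bar>"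
    proof (cases "s + 1 \<le> a")
      case True then have "s+1 \<in> B" unfolding B_def using s by auto
      then show ?thesis using a'ge by force
    next
      case False then show ?thesis using a(3) s \<open>a' \<le> a\<close> by force
    qed
  qed
  moreover have "a' \<in> insert 0 ((\<lambda>s. s+1) ` T)" using a'B unfolding B_def by auto
  ultimately show "\<exists>a\<in>insert 0 ((\<lambda>s. s+1) ` T). 0 \<le> a \<and> a+1 \<le> X \<and> (\<forall>s\<in>T. 1 \<le> \<bar>s-a\<bar>)"
    using \<open>0 \<le> a'\<close> \<open>a' \<le> a\<close> a by force
next
  assume "\<exists>a\<in>insert 0 ((\<lambda>s. s+1) ` T). 0 \<le> a \<and> a+1 \<le> X \<and> (\<forall>s\<in>T. 1 \<le> \<bar>s-a\<bar>)"
  then obtain a where "0 \<le> a" "a+1 \<le> X" "\<forall>s\<in>T. 1 \<le> \<bar>s-a\<bar>" by blast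
  then show "\<not> park_saturated X T" unfolding park_saturated_def by blast
qed

definition okp :: "real \<Rightarrow> real set \<Rightarrow> real stream \<Rightarrow> nat \<Rightarrow> real \<Rightarrow> bool" where
  "okp X S w n a = (0 \<le> a \<and> a + 1 \<le> X \<and> (\<forall>s\<in>S. 1 \<le> \<bar>s - a\<bar>) \<and> (\<forall>j\<in>{..<n}. acc S w j \<longrightarrow> 1 \<le> \<bar>w!!j - a\<bar>))"

lemma sat_pp_iff:
  assumes "finite S"
  shows "park_saturated X (pp S w n) \<longleftrightarrow>
     \<not> (okp X S w n 0 \<or> (\<exists>s\<in>S. okp X S w n (s+1)) \<or> (\<exists>j\<in>{..<n}. acc S w j \<and> okp X S w n (w!!j + 1)))"
proof -
  have fin: "finite (pp S w n)" using finite_pp assms by auto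
  have okeq: "\<And>a. (0 \<le> a \<and> a+1 \<le> X \<and> (\<forall>s\<in>pp S w n. 1 \<le> \<bar>s-a\<bar>)) = okp X S w n a"
    unfolding okp_def pp_eq by auto
  have "(\<exists>a\<in>insert 0 ((\<lambda>s. s+1) ` pp S w n). okp X S w n a) \<longleftrightarrow>
     (okp X S w n 0 \<or> (\<exists>s\<in>S. okp X S w n (s+1)) \<or> (\<exists>j\<in>{..<n}. acc S w j \<and> okp X S w n (w!!j + 1)))"
    unfolding pp_eq by blast
  with sat_witness[OF fin, of X] okeq have "\<not> park_saturated X (pp S w n) \<longleftrightarrow> (okp X S w n 0 \<or> (\<exists>s\<in>S. okp X S w n (s+1)) \<or> (\<exists>j\<in>{..<n}. acc S w j \<and> okp X S w n (w!!j + 1)))" by simp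
  then show ?thesis by blast
qed

lemma sat_meas:
  assumes "finite S"
  shows "Measurable.pred (stream_space borel) (\<lambda>w. park_saturated X (pp S w n))"
proof -
  have [measurable]: "\<And>j. Measurable.pred (stream_space borel) (\<lambda>w. acc S w j)" using acc_meas assms by auto
  have [measurable]: "\<And>a. Measurable.pred (stream_space borel) (\<lambda>w. okp X S w n a)"
    unfolding okp_def
    apply (intro pred_intros_logic pred_intros_countable_bounded)
    using assms by (auto intro: countable_finite)
  have [measurable]: "Measurable.pred (stream_space borel) (\<lambda>w. okp X S w n (w!!j + 1))" for j
    unfolding okp_def
    apply (intro pred_intros_logic pred_intros_countable_bounded)
    using assms by (auto intro: countable_finite)
  have "Measurable.pred (stream_space borel) (\<lambda>w. \<not> (okp X S w n 0 \<or> (\<exists>s\<in>S. okp X S w n (s+1)) \<or> (\<exists>j\<in>{..<n}. acc S w j \<and> okp X S w n (w!!j + 1))))"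
    apply (intro pred_intros_logic pred_intros_countable_bounded)
    using assms by (auto intro: countable_finite)
  then show ?thesis using sat_pp_iff[OF assms] by simp
qed

definition CC :: "real \<Rightarrow> real set \<Rightarrow> real stream \<Rightarrow> real" where
  "CC X S w = (if \<exists>n. park_saturated X (pp S w n)
     then real (card (pp S w (LEAST n. park_saturated X (pp S w n)))) else 0)"

lemma CC_meas_borel:
  assumes "finite S"
  shows "CC X S \<in> borel_measurable (stream_space borel)"
proof -
  have [measurable]: "\<And>n. Measurable.pred (stream_space borel) (\<lambda>w. park_saturated X (pp S w n))"
    using sat_meas assms by auto
  have [measurable]: "\<And>n. (\<lambda>w. real (card (pp S w n))) \<in> borel_measurable (stream_space borel)"
    using card_pp_meas assms by auto
  have "(\<lambda>w. real (card (pp S w (LEAST n. park_saturated X (pp S w n))))) \<in> borel_measurable (stream_space borel)"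
    by (rule measurable_compose_countable[where f="\<lambda>n w. real (card (pp S w n))"]) measurable
  then show ?thesis unfolding CC_def[abs_def] by measurable
qed

lemma CC_meas:
  assumes "finite S" "sets M = sets borel"
  shows "CC X S \<in> borel_measurable (stream_space M)"
  by (subst measurable_cong_sets[OF sets_stream_space_cong[OF assms(2)] refl]) (rule CC_meas_borel[OF assms(1)])

lemma q_int:
  fixes c l :: real
  assumes "c > 0" "l > 0"
  shows "((\<lambda>t. l * exp (- l * t) / (1 - exp (- l * c))) has_integral 1) {0..c}"
proof -
  have "0 < l * c" using assms by simp
  then have d: "exp (- l * c) < 1" by simp
  define f where "f t = - exp (- l * t) / (1 - exp (- l * c))" for t
  have "((\<lambda>t. l * exp (- l * t) / (1 - exp (- l * c))) has_integral (f c - f 0)) {0..c}"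
  proof (rule fundamental_theorem_of_calculus)
    show "0 \<le> c" using assms by simp
    fix x :: real
    have "(f has_real_derivative l * exp (- l * x) / (1 - exp (- l * c))) (at x within {0..c})"
      unfolding f_def using assms by (auto intro!: derivative_eq_intros)
    then show "(f has_vector_derivative l * exp (- l * x) / (1 - exp (- l * c))) (at x within {0..c})"
      using has_real_derivative_iff_has_vector_derivative by blast
  qed
  moreover have "f c - f 0 = 1"
  proof -
    have g: "\<And>e::real. e < 1 \<Longrightarrow> - e / (1 - e) - (- 1 / (1 - e)) = 1" by (auto simp: field_simps)
    show ?thesis unfolding f_def using g[OF d] by simp
  qed
  ultimately show ?thesis by simp
qed

lemma dens_meas[measurable]: "park_dens l X \<in> borel_measurable borel"
  unfolding park_dens_def by measurable

lemma dens_nonneg: "l > 0 \<Longrightarrow> 0 \<le> park_dens l X t"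
  unfolding park_dens_def
  by (auto intro!: divide_nonneg_pos simp: mult_less_0_iff)

lemma dens_int:
  assumes "X > 1" "l > 0"
  shows "(park_dens l X has_integral 1) UNIV"
proof -
  have "((\<lambda>t. if t \<in> {0..X-1} then l * exp (- l * t) / (1 - exp (- l * (X-1))) else 0) has_integral 1) UNIV"
    using q_int[of "X-1" l] assms by (subst has_integral_restrict_UNIV) simp
  then show ?thesis
    apply (rule has_integral_spike_finite[where S="{0, X-1}", rotated 2])
    by (auto simp: park_dens_def)
qed

lemma nn_dens: "X > 1 \<Longrightarrow> l > 0 \<Longrightarrow> (\<integral>\<^sup>+ t. ennreal (park_dens l X t) \<partial>lborel) = 1"
  using nn_integral_has_integral_lborel[OF dens_meas dens_nonneg dens_int] by simp

lemma sets_cand[simp, measurable_cong]: "sets (park_cand l X) = sets borel"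
  unfolding park_cand_def by simp

lemma space_cand[simp]: "space (park_cand l X) = UNIV"
  unfolding park_cand_def by simp

lemma prob_cand: "X > 1 \<Longrightarrow> l > 0 \<Longrightarrow> prob_space (park_cand l X)"
  by (rule prob_spaceI) (simp add: park_cand_def emeasure_density nn_dens)

lemma nn_cand:
  assumes "g \<in> borel_measurable borel"
  shows "(\<integral>\<^sup>+ t. g t \<partial>park_cand l X) = (\<integral>\<^sup>+ t. ennreal (park_dens l X t) * g t \<partial>lborel)"
  unfolding park_cand_def using assms by (subst nn_integral_density) auto

lemma AE_cand: "AE t in park_cand l X. 0 < t \<and> t < X - 1"
  unfolding park_cand_def
  apply (subst AE_density)
   apply measurable
  by (auto simp: park_dens_def)

lemma AE_stream_cand:
  assumes "X > 1" "l > 0"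
  shows "AE w in stream_space (park_cand l X). \<forall>i. 0 < w!!i \<and> w!!i < X - 1"
proof -
  interpret prob_space "park_cand l X" using prob_cand assms by auto
  have "AE w in stream_space (park_cand l X). stream_all (\<lambda>t. 0 < t \<and> t < X - 1) w"
    apply (rule AE_stream_all)
     apply measurable
    using AE_cand by simp
  then show ?thesis by (auto elim!: eventually_mono simp: stream_all_def sset_range)
qed

lemma sat_step_same:
  assumes "park_saturated X S" "0 \<le> s" "s + 1 \<le> X"
  shows "park_step S s = S"
  using assms unfolding park_saturated_def park_step_def by auto

lemma CC_Stream:
  assumes "0 \<le> s" "s + 1 \<le> X"
  shows "CC X S (s ## w) = CC X (park_step S s) w"
proof (cases "park_saturated X S")
  case True
  then have st: "park_step S s = S" using sat_step_same assms by auto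
  have "\<exists>n. park_saturated X (pp S (s##w) n)" using True by (intro exI[of _ 0]) simp
  moreover have "(LEAST n. park_saturated X (pp S (s##w) n)) = 0" using True by (intro Least_eq_0) simp
  moreover have "\<exists>n. park_saturated X (pp S w n)" using True by (intro exI[of _ 0]) simp
  moreover have "(LEAST n. park_saturated X (pp S w n)) = 0" using True by (intro Least_eq_0) simp
  ultimately show ?thesis unfolding CC_def st by simp
next
  case False
  have ex: "(\<exists>n. park_saturated X (pp S (s##w) n)) \<longleftrightarrow> (\<exists>n. park_saturated X (pp (park_step S s) w n))"
  proof
    assume "\<exists>n. park_saturated X (pp S (s##w) n)"
    then obtain n where n: "park_saturated X (pp S (s##w) n)" by auto
    then obtain m where "n = Suc m" using False by (cases n) auto
    then show "\<exists>n. park_saturated X (pp (park_step S s) w n)" using n pp_Stream by metis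
  next
    assume "\<exists>n. park_saturated X (pp (park_step S s) w n)"
    then obtain n where "park_saturated X (pp (park_step S s) w n)" by auto
    then show "\<exists>n. park_saturated X (pp S (s##w) n)" using pp_Stream by metis
  qed
  show ?thesis
  proof (cases "\<exists>n. park_saturated X (pp (park_step S s) w n)")
    case True
    obtain n where n: "park_saturated X (pp S (s##w) n)" using ex True by auto
    have "(LEAST n. park_saturated X (pp S (s##w) n)) = Suc (LEAST m. park_saturated X (pp S (s##w) (Suc m)))"
      by (rule Least_Suc[where P="\<lambda>n. park_saturated X (pp S (s##w) n)", OF n]) (simp add: False)
    also have "\<dots> = Suc (LEAST n. park_saturated X (pp (park_step S s) w n))"
      by (simp only: pp_Stream)
    finally have "(LEAST n. park_saturated X (pp S (s##w) n)) = Suc (LEAST n. park_saturated X (pp (park_step S s) w n))" .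
    then show ?thesis unfolding CC_def using ex True by (simp add: pp_Stream del: pp.simps)
  next
    case F2: False
    then show ?thesis unfolding CC_def using ex by simp
  qed
qed

definition sep :: "real set \<Rightarrow> bool" where
  "sep F = (\<forall>x\<in>F. \<forall>y\<in>F. x \<noteq> y \<longrightarrow> 1 \<le> \<bar>x - y\<bar>)"

lemma sep_card:
  "finite F \<Longrightarrow> sep F \<Longrightarrow> F \<subseteq> {a..b} \<Longrightarrow> a \<le> b \<Longrightarrow> real (card F) \<le> b - a + 1"
proof (induct "card F" arbitrary: F b rule: less_induct)
  case less
  show ?case
  proof (cases "F = {}")
    case True then show ?thesis using less by simp
  next
    case False
    define m where "m = Max F"
    have mF: "m \<in> F" unfolding m_def using less False by auto
    have mb: "m \<le> b" using mF less by auto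
    define F' where "F' = F - {m}"
    have cF: "card F = card F' + 1" unfolding F'_def using card.remove[OF less(2) mF] by simp
    show ?thesis
    proof (cases "F' = {}")
      case True then show ?thesis using cF less by simp
    next
      case False
      have sub: "F' \<subseteq> {a..m-1}"
      proof
        fix x assume x: "x \<in> F'"
        then have "x \<in> F" "x \<noteq> m" unfolding F'_def by auto
        moreover have "x \<le> m" unfolding m_def using \<open>x \<in> F\<close> less by auto
        moreover have "1 \<le> \<bar>x - m\<bar>" using less(3) \<open>x \<in> F\<close> mF \<open>x \<noteq> m\<close> unfolding sep_def by auto
        ultimately show "x \<in> {a..m-1}" using less(4) by auto
      qed
      then have "a \<le> m - 1" using False by auto
      have "real (card F') \<le> m - 1 - a + 1"
        apply (rule less(1))
        using cF less(2,3) sub \<open>a \<le> m - 1\<close> unfolding F'_def sep_def by auto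
      then show ?thesis using cF mb by simp
    qed
  qed
qed

lemma pp_sub: "pp S w n \<subseteq> S \<union> (pp S w n - S)" by auto

lemma new_sep: "sep (pp S w n - S)"
proof -
  have "pp S w n - S \<subseteq> {w!!j | j. j < n \<and> acc S w j}" unfolding pp_eq by auto
  moreover have "sep {w!!j | j. j < n \<and> acc S w j}"
    unfolding sep_def
  proof (clarify)
    fix j k assume "j < n" "acc S w j" "k < n" "acc S w k" "w!!j \<noteq> w!!k"
    then have "j < k \<or> k < j" by (metis linorder_neqE_nat)
    then show "1 \<le> \<bar>w!!j - w!!k\<bar>"
      using acc_iff[of S w k] acc_iff[of S w j] \<open>acc S w j\<close> \<open>acc S w k\<close> by (auto simp: abs_minus_commute)
  qed
  ultimately show ?thesis unfolding sep_def by blast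
qed

lemma card_pp_bound:
  assumes "finite S" "X > 1" "\<forall>i. 0 < w!!i \<and> w!!i < X - 1"
  shows "real (card (pp S w n)) \<le> real (card S) + X"
proof -
  have sub: "pp S w n - S \<subseteq> {0..X-1}" unfolding pp_eq using assms(3) by (auto simp: less_imp_le)
  have fin: "finite (pp S w n - S)" using finite_pp assms by auto
  have "real (card (pp S w n - S)) \<le> X - 1 - 0 + 1"
    by (rule sep_card[OF fin new_sep sub]) (use assms in auto)
  moreover have "card (pp S w n) \<le> card S + card (pp S w n - S)"
  proof -
    have "card (pp S w n) \<le> card (S \<union> (pp S w n - S))"
      by (rule card_mono) (use fin assms(1) in auto)
    also have "\<dots> \<le> card S + card (pp S w n - S)" by (rule card_Un_le)
    finally show ?thesis .
  qed
  ultimately show ?thesis by linarith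
qed

lemma CC_cases: "CC X S w = 0 \<or> (\<exists>n. CC X S w = real (card (pp S w n)))"
  unfolding CC_def by (cases "\<exists>n. park_saturated X (pp S w n)") auto

lemma CC_bound:
  assumes "finite S" "X > 1" "\<forall>i. 0 < w!!i \<and> w!!i < X - 1"
  shows "CC X S w \<le> real (card S) + X"
  using card_pp_bound[OF assms] CC_cases[of X S w] assms(2) by force

lemma CC_nonneg: "0 \<le> CC X S w"
  using CC_cases[of X S w] by force

definition HH :: "real \<Rightarrow> real \<Rightarrow> real set \<Rightarrow> ennreal" where
  "HH l X S = (\<integral>\<^sup>+ w. ennreal (CC X S w) \<partial>stream_space (park_cand l X))"

definition hh :: "real \<Rightarrow> real \<Rightarrow> real set \<Rightarrow> ennreal" where
  "hh l u S = (if u \<le> 1 then ennreal (real (card S)) else HH l u S)"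

definition md :: "real \<Rightarrow> real \<Rightarrow> real set \<Rightarrow> ennreal" where
  "md l X B = (\<integral>\<^sup>+ s. ennreal (park_dens l X s) * indicator B s \<partial>lborel)"

definition Phi :: "real \<Rightarrow> real \<Rightarrow> real set \<Rightarrow> real \<Rightarrow> ennreal" where
  "Phi l X S s = (\<integral>\<^sup>+ w. ennreal (CC X S (s ## w)) \<partial>stream_space (park_cand l X))"

definition good :: "real \<Rightarrow> real set \<Rightarrow> bool" where
  "good X S = (\<forall>u\<in>insert (-1) (insert X S). \<forall>v\<in>insert (-1) (insert X S). v - u \<noteq> 2)"

lemma AS_sets[measurable]: "finite S \<Longrightarrow> AS S \<in> sets borel"
proof -
  assume fS: "finite S"
  have "Measurable.pred borel (\<lambda>a. \<forall>s\<in>S. 1 \<le> \<bar>s - a\<bar>)"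
    by (intro pred_intros_finite fS) measurable
  then show ?thesis unfolding AS_def by (simp add: pred_def)
qed

lemma Phi_meas:
  assumes "finite S" "X > 1" "l > 0"
  shows "Phi l X S \<in> borel_measurable borel"
proof -
  interpret prob_space "stream_space (park_cand l X)"
    using prob_space.prob_space_stream_space[OF prob_cand[OF assms(2,3)]] .
  have m1: "(\<lambda>p. fst p ## snd p) \<in> (borel \<Otimes>\<^sub>M stream_space borel) \<rightarrow>\<^sub>M stream_space (borel::real measure)"
    by (intro measurable_Stream measurable_fst'' measurable_snd'') auto
  have m2: "(\<lambda>p. CC X S (fst p ## snd p)) \<in> borel_measurable (borel \<Otimes>\<^sub>M stream_space borel)"
    using measurable_compose[OF m1 CC_meas_borel[OF assms(1)]] by simp
  have m3: "(\<lambda>p. ennreal (CC X S (fst p ## snd p))) \<in> borel_measurable (borel \<Otimes>\<^sub>M stream_space borel)"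
    using measurable_compose[OF m2 measurable_ennreal] by simp
  have eq: "sets (borel \<Otimes>\<^sub>M stream_space (park_cand l X)) = sets (borel \<Otimes>\<^sub>M stream_space (borel::real measure))"
    by (intro sets_pair_measure_cong sets_stream_space_cong) auto
  have "(\<lambda>p. ennreal (CC X S (fst p ## snd p))) \<in> borel_measurable (borel \<Otimes>\<^sub>M stream_space (park_cand l X))"
    by (subst measurable_cong_sets[OF eq refl]) (rule m3)
  from borel_measurable_nn_integral_fst[OF this] show ?thesis
    unfolding Phi_def[abs_def] by simp
qed

lemma HH_bound:
  assumes "finite S" "X > 1" "l > 0"
  shows "HH l X S \<le> ennreal (real (card S) + X)"
proof -
  interpret P: prob_space "stream_space (park_cand l X)"
    using prob_space.prob_space_stream_space[OF prob_cand[OF assms(2,3)]] .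
  have "HH l X S \<le> (\<integral>\<^sup>+ w. ennreal (real (card S) + X) \<partial>stream_space (park_cand l X))"
    unfolding HH_def
    apply (rule nn_integral_mono_AE)
    using AE_stream_cand[OF assms(2,3)] by (auto elim!: eventually_mono intro!: ennreal_leI CC_bound[OF assms(1,2)])
  also have "\<dots> = ennreal (real (card S) + X)" by (simp add: P.emeasure_space_1)
  finally show ?thesis .
qed

lemma HH_fin: "finite S \<Longrightarrow> X > 1 \<Longrightarrow> l > 0 \<Longrightarrow> HH l X S < \<infinity>"
  using HH_bound[of S X l] by (simp add: le_less_trans)

lemma HH_Phi:
  assumes "finite S" "X > 1" "l > 0"
  shows "HH l X S = (\<integral>\<^sup>+ s. ennreal (park_dens l X s) * Phi l X S s \<partial>lborel)"
proof -
  interpret prob_space "park_cand l X" using prob_cand[OF assms(2,3)] .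
  have m: "(\<lambda>w. ennreal (CC X S w)) \<in> borel_measurable (stream_space (park_cand l X))"
    using CC_meas[OF assms(1), of "park_cand l X" X] by simp
  show ?thesis
    unfolding HH_def nn_integral_stream_space[OF m] Phi_def[symmetric]
    by (rule nn_cand[OF Phi_meas[OF assms]])
qed

lemma Phi_step:
  assumes "0 < s" "s < X - 1"
  shows "Phi l X S s = HH l X (park_step S s)"
  unfolding Phi_def HH_def using CC_Stream[of s X S] assms by simp

lemma md_le1: "X > 1 \<Longrightarrow> l > 0 \<Longrightarrow> md l X B \<le> 1"
proof -
  assume a: "X > 1" "l > 0"
  have "md l X B \<le> (\<integral>\<^sup>+ s. ennreal (park_dens l X s) \<partial>lborel)"
    unfolding md_def by (intro nn_integral_mono) (auto simp: indicator_def)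
  then show ?thesis using nn_dens[OF a] by simp
qed

lemma md_compl:
  assumes "X > 1" "l > 0" "B \<in> sets borel"
  shows "md l X B + md l X (- B) = 1"
proof -
  have "md l X B + md l X (- B) = (\<integral>\<^sup>+ s. ennreal (park_dens l X s) * indicator B s + ennreal (park_dens l X s) * indicator (- B) s \<partial>lborel)"
    unfolding md_def using assms(3) by (subst nn_integral_add) auto
  also have "\<dots> = (\<integral>\<^sup>+ s. ennreal (park_dens l X s) \<partial>lborel)"
    by (intro nn_integral_cong) (auto simp: indicator_def)
  finally show ?thesis using nn_dens[OF assms(1,2)] by simp
qed

lemma HH_rec:
  assumes "finite S" "X > 1" "l > 0"
  shows "md l X (AS S) * HH l X S = (\<integral>\<^sup>+ s. ennreal (park_dens l X s) * indicator (AS S) s * Phi l X S s \<partial>lborel)"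
proof -
  let ?A = "AS S"
  let ?I = "(\<integral>\<^sup>+ s. ennreal (park_dens l X s) * indicator ?A s * Phi l X S s \<partial>lborel)"
  have [measurable]: "Phi l X S \<in> borel_measurable borel" using Phi_meas[OF assms] .
  have [measurable]: "?A \<in> sets borel" using AS_sets assms by auto
  have "HH l X S = (\<integral>\<^sup>+ s. ennreal (park_dens l X s) * Phi l X S s \<partial>lborel)"
    by (rule HH_Phi[OF assms])
  also have "\<dots> = (\<integral>\<^sup>+ s. ennreal (park_dens l X s) * indicator ?A s * Phi l X S s + ennreal (park_dens l X s) * indicator (- ?A) s * HH l X S \<partial>lborel)"
  proof (intro nn_integral_cong)
    fix s :: real
    show "ennreal (park_dens l X s) * Phi l X S s = ennreal (park_dens l X s) * indicator ?A s * Phi l X S s + ennreal (park_dens l X s) * indicator (- ?A) s * HH l X S"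
    proof (cases "0 < s \<and> s < X - 1")
      case True
      then have "Phi l X S s = HH l X (park_step S s)" using Phi_step by auto
      then show ?thesis by (cases "s \<in> ?A") (auto simp: park_step_def AS_def indicator_def)
    next
      case False
      then show ?thesis by (auto simp: park_dens_def)
    qed
  qed
  also have "\<dots> = ?I + md l X (- ?A) * HH l X S"
    unfolding md_def
    by (subst nn_integral_add) (auto simp: nn_integral_multc)
  finally have e1: "HH l X S = ?I + md l X (- ?A) * HH l X S" .
  have "HH l X S = (md l X ?A + md l X (- ?A)) * HH l X S"
    using md_compl[OF assms(2,3)] by simp
  then have e2: "HH l X S = md l X (- ?A) * HH l X S + md l X ?A * HH l X S"
    by (simp add: distrib_right add.commute)
  have fin: "md l X (- ?A) * HH l X S \<noteq> \<infinity>"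
    using md_le1[OF assms(2,3)] HH_fin[OF assms] 
    by (metis ennreal_mult_less_top infinity_ennreal_def le_less_trans less_top ennreal_one_less_top)
  from e1 e2 have "md l X (- ?A) * HH l X S + md l X ?A * HH l X S = md l X (- ?A) * HH l X S + ?I"
    by (simp add: add.commute)
  then show ?thesis using fin by (simp add: ennreal_add_left_cancel)
qed

lemma good_room:
  assumes "finite S" "good X S" "\<not> park_saturated X S"
  shows "\<exists>a b. a < b \<and> 0 \<le> a \<and> b \<le> X - 1 \<and> {a<..<b} \<subseteq> AS S"
proof -
  obtain a where a: "a \<in> insert 0 ((\<lambda>s. s+1) ` S)" "0 \<le> a" "a + 1 \<le> X" "\<forall>s\<in>S. 1 \<le> \<bar>s - a\<bar>"
    using sat_witness[OF assms(1), of X] assms(3) by blast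
  have c: "a - 1 \<in> insert (-1) (insert X S)" using a(1) by auto
  have Xin: "X \<in> insert (-1) (insert X S)" by simp
  have "X - (a - 1) \<noteq> 2" using assms(2) c Xin unfolding good_def by blast
  then have aX: "a < X - 1" using a(3) by simp
  have sne: "\<forall>s\<in>S. s \<noteq> a + 1"
  proof
    fix s assume "s \<in> S"
    then have "s \<in> insert (-1) (insert X S)" by simp
    then have "s - (a - 1) \<noteq> 2" using assms(2) c unfolding good_def by blast
    then show "s \<noteq> a + 1" by auto
  qed
  define D where "D = insert (X - 1 - a) ((\<lambda>s. s - a - 1) ` {s\<in>S. s > a})"
  have fD: "finite D" unfolding D_def using assms(1) by auto
  have Dpos: "\<forall>d\<in>D. 0 < d"
  proof
    fix d assume "d \<in> D"
    then consider "d = X - 1 - a" | s where "s \<in> S" "s > a" "d = s - a - 1" unfolding D_def by auto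
    then show "0 < d"
    proof cases
      case 1 then show ?thesis using aX by simp
    next
      case 2
      have "1 \<le> \<bar>s - a\<bar>" using a(4) 2 by auto
      then show ?thesis using 2 sne by auto
    qed
  qed
  define \<delta> where "\<delta> = Min D"
  have "\<delta> \<in> D" unfolding \<delta>_def using fD D_def by (intro Min_in) auto
  then have dpos: "0 < \<delta>" using Dpos by auto
  have dle: "\<And>d. d \<in> D \<Longrightarrow> \<delta> \<le> d" unfolding \<delta>_def using fD by auto
  have "\<delta> \<le> X - 1 - a" using dle[of "X - 1 - a"] D_def by auto
  moreover have "{a<..<a+\<delta>} \<subseteq> AS S"
  proof
    fix y assume y: "y \<in> {a<..<a+\<delta>}"
    show "y \<in> AS S" unfolding AS_def
    proof (clarify)
      fix s assume s: "s \<in> S"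
      show "1 \<le> \<bar>s - y\<bar>"
      proof (cases "s > a")
        case True
        then have "\<delta> \<le> s - a - 1" using dle[of "s - a - 1"] s unfolding D_def by auto
        then show ?thesis using y by auto
      next
        case False
        then have "s \<le> a - 1" using a(4) s by auto
        then show ?thesis using y by auto
      qed
    qed
  qed
  ultimately show ?thesis using a(2) dpos by (intro exI[of _ a] exI[of _ "a + \<delta>"]) auto
qed

lemma md_pos:
  assumes "l > 0" "X > 1" "a < b" "0 \<le> a" "b \<le> X - 1" "{a<..<b} \<subseteq> B"
  shows "0 < md l X B"
proof -
  define m where "m = l * exp (- l * (X - 1)) / (1 - exp (- l * (X - 1)))"
  have "0 < l * (X - 1)" using assms by simp
  then have e1: "exp (- l * (X - 1)) < 1" by simp
  have mpos: "0 < m" unfolding m_def using assms e1 by (intro divide_pos_pos) auto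
  have "(\<integral>\<^sup>+ s. ennreal m * indicator {a<..<b} s \<partial>lborel) \<le> md l X B"
    unfolding md_def
  proof (intro nn_integral_mono)
    fix s
    show "ennreal m * indicator {a<..<b} s \<le> ennreal (park_dens l X s) * indicator B s"
    proof (cases "s \<in> {a<..<b}")
      case True
      then have s: "0 < s" "s < X - 1" "s \<in> B" using assms by auto
      have "exp (- l * (X - 1)) \<le> exp (- l * s)" using s assms by simp
      then have "m \<le> park_dens l X s" unfolding m_def park_dens_def using s e1 assms
        by (auto intro!: divide_right_mono mult_left_mono)
      then show ?thesis using True s by (auto intro: ennreal_leI)
    qed auto
  qed
  moreover have "(\<integral>\<^sup>+ s. ennreal m * indicator {a<..<b} s \<partial>lborel) = ennreal m * ennreal (b - a)"
    using assms by (simp add: nn_integral_cmult_indicator)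
  moreover have "0 < ennreal m * ennreal (b - a)" using mpos assms
    by (simp add: ennreal_mult[symmetric])
  ultimately show ?thesis by order
qed

lemma HH_sat:
  assumes "park_saturated X S" "X > 1" "l > 0"
  shows "HH l X S = ennreal (real (card S))"
proof -
  interpret P: prob_space "stream_space (park_cand l X)"
    using prob_space.prob_space_stream_space[OF prob_cand[OF assms(2,3)]] .
  have "\<And>w. CC X S w = real (card S)"
  proof -
    fix w
    have "\<exists>n. park_saturated X (pp S w n)" using assms by (intro exI[of _ 0]) simp
    moreover have "(LEAST n. park_saturated X (pp S w n)) = 0" using assms by (intro Least_eq_0) simp
    ultimately show "CC X S w = real (card S)" unfolding CC_def by simp
  qed
  then show ?thesis unfolding HH_def by (simp add: P.emeasure_space_1)
qed

lemma HH_base: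
  assumes "finite S" "X > 1" "l > 0" "good X S" "md l X (AS S) = 0"
  shows "HH l X S = ennreal (real (card S))"
proof (cases "park_saturated X S")
  case True then show ?thesis using HH_sat assms by auto
next
  case False
  then obtain a b where "a < b" "0 \<le> a" "b \<le> X - 1" "{a<..<b} \<subseteq> AS S"
    using good_room[OF assms(1,4)] by blast
  then have "0 < md l X (AS S)" using md_pos assms by blast
  then show ?thesis using assms by simp
qed

lemma dens_small: "u \<le> 1 \<Longrightarrow> park_dens l u s = 0"
  unfolding park_dens_def by auto

lemma md_small: "u \<le> 1 \<Longrightarrow> md l u B = 0"
  unfolding md_def by (simp add: dens_small)

lemma hh_rec:
  assumes "finite S" "l > 0"
  shows "\<exists>g \<in> borel_measurable borel. (\<forall>s. s \<in> AS S \<and> 0 < s \<and> s < u - 1 \<longrightarrow> g s = hh l u (insert s S)) \<and>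
     md l u (AS S) * hh l u S = (\<integral>\<^sup>+ s. ennreal (park_dens l u s) * indicator (AS S) s * g s \<partial>lborel)"
proof (cases "u \<le> 1")
  case True
  show ?thesis
    by (rule bexI[of _ "\<lambda>_. 0"]) (use True in \<open>auto simp: md_small dens_small\<close>)
next
  case False
  then have u: "u > 1" by simp
  show ?thesis
  proof (rule bexI[of _ "Phi l u S"])
    show "Phi l u S \<in> borel_measurable borel" using Phi_meas assms u by auto
    have "\<forall>s. s \<in> AS S \<and> 0 < s \<and> s < u - 1 \<longrightarrow> Phi l u S s = hh l u (insert s S)"
      using Phi_step u unfolding hh_def by (auto simp: park_step_def AS_def)
    moreover have "md l u (AS S) * hh l u S = (\<integral>\<^sup>+ s. ennreal (park_dens l u s) * indicator (AS S) s * Phi l u S s \<partial>lborel)"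
      using HH_rec[OF assms(1) u assms(2)] u unfolding hh_def by simp
    ultimately show "(\<forall>s. s \<in> AS S \<and> 0 < s \<and> s < u - 1 \<longrightarrow> Phi l u S s = hh l u (insert s S)) \<and>
     md l u (AS S) * hh l u S = (\<integral>\<^sup>+ s. ennreal (park_dens l u s) * indicator (AS S) s * Phi l u S s \<partial>lborel)" ..
  qed
qed

lemma hh_base:
  assumes "finite S" "l > 0" "good u S" "md l u (AS S) = 0"
  shows "hh l u S = ennreal (real (card S))"
  using HH_base[OF assms(1) _ assms(2-4)] unfolding hh_def by auto

lemma hh_fin: "finite S \<Longrightarrow> l > 0 \<Longrightarrow> hh l u S < \<infinity>"
  unfolding hh_def using HH_fin by auto

lemma nn_shift:
  fixes f :: "real \<Rightarrow> ennreal"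
  assumes [measurable]: "f \<in> borel_measurable borel"
  shows "(\<integral>\<^sup>+ s. f (s - c) \<partial>lborel) = (\<integral>\<^sup>+ u. f u \<partial>lborel)"
  using nn_integral_real_affine[OF assms, of 1 "- c"] by (simp add: algebra_simps)

lemma good_insert:
  assumes "good X S" "s \<notin> (\<lambda>u. u + 2) ` insert (-1) (insert X S)" "s \<notin> (\<lambda>u. u - 2) ` insert (-1) (insert X S)"
  shows "good X (insert s S)"
  using assms unfolding good_def by (auto simp: algebra_simps)

lemma good_sub:
  assumes "good X S" "insert (-1) (insert Y T) \<subseteq> (\<lambda>u. u + c) ` insert (-1) (insert X S)"
  shows "good Y T"
  unfolding good_def
proof (intro ballI)
  fix u v assume uv: "u \<in> insert (-1) (insert Y T)" "v \<in> insert (-1) (insert Y T)"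
  obtain u' where u': "u' \<in> insert (-1) (insert X S)" "u = u' + c" using uv(1) assms(2) by blast
  obtain v' where v': "v' \<in> insert (-1) (insert X S)" "v = v' + c" using uv(2) assms(2) by blast
  have "v' - u' \<noteq> 2" using assms(1) u' v' unfolding good_def by blast
  then show "v - u \<noteq> 2" using u' v' by simp
qed

lemma sep_insert: "sep S \<Longrightarrow> s \<in> AS S \<Longrightarrow> sep (insert s S)"
  unfolding sep_def AS_def by (auto simp: abs_minus_commute)

lemma sep_card_bound:
  assumes "finite S" "sep S" "S \<subseteq> {0..X-1}" "X \<ge> 1"
  shows "card S \<le> nat \<lfloor>X\<rfloor>"
proof -
  have "real (card S) \<le> X - 1 - 0 + 1" using sep_card[OF assms(1-3)] assms(4) by simp
  then show ?thesis by linarith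
qed

lemma nn_shift2:
  fixes f :: "real \<Rightarrow> ennreal"
  assumes [measurable]: "f \<in> borel_measurable borel"
  shows "(\<integral>\<^sup>+ s. f (s - a - b) \<partial>lborel) = (\<integral>\<^sup>+ u. f u \<partial>lborel)"
  using nn_shift[OF assms, of "a + b"] by (simp add: diff_diff_eq)

context
  fixes l X t :: real
  assumes lpos: "l > 0" and X1: "X > 1" and t0: "0 < t" and tX: "t < X - 1"
begin

abbreviation "r \<equiv> X - 1 - t"

definition cL where "cL = (1 - exp (- l * (t - 1))) / (1 - exp (- l * (X - 1)))"
definition cR where "cR = exp (- l * (t + 1)) * (1 - exp (- l * (r - 1))) / (1 - exp (- l * (X - 1)))"

lemma ZX: "0 < 1 - exp (- l * (X - 1))"
proof -
  have "0 < l * (X - 1)" using lpos X1 by simp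
  then show ?thesis by simp
qed

lemma cL_pos: "t > 1 \<Longrightarrow> 0 < cL"
proof -
  assume "t > 1"
  then have "0 < l * (t - 1)" using lpos by simp
  then have "0 < 1 - exp (- l * (t - 1))" by simp
  then show ?thesis unfolding cL_def using ZX by simp
qed

lemma cR_pos: "r > 1 \<Longrightarrow> 0 < cR"
proof -
  assume "r > 1"
  then have "0 < l * (r - 1)" using lpos by simp
  then have "0 < 1 - exp (- l * (r - 1))" by simp
  then show ?thesis unfolding cR_def using ZX by simp
qed

lemma densL: "0 < s \<Longrightarrow> s < t - 1 \<Longrightarrow> park_dens l X s = cL * park_dens l t s"
proof -
  assume s: "0 < s" "s < t - 1"
  then have "0 < l * (t - 1)" using lpos by simp
  then have "0 < 1 - exp (- l * (t - 1))" by simp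
  then have ne: "1 - exp (- l * (t - 1)) \<noteq> 0" by linarith
  have g: "\<And>a b c::real. a \<noteq> 0 \<Longrightarrow> a / b * (c / a) = c / b" by simp
  show ?thesis unfolding cL_def park_dens_def using s tX g[OF ne] by simp
qed

lemma densR: "t + 1 < s \<Longrightarrow> s < X - 1 \<Longrightarrow> park_dens l X s = cR * park_dens l r (s - t - 1)"
proof -
  assume s: "t + 1 < s" "s < X - 1"
  then have "0 < l * (r - 1)" using lpos by simp
  then have z: "0 < 1 - exp (- l * (r - 1))" by simp
  have e: "exp (- l * (t + 1)) * exp (- l * (s - t - 1)) = exp (- l * s)"
    by (simp add: exp_add[symmetric] algebra_simps)
  have "cR * park_dens l r (s - t - 1) = exp (- l * (t + 1)) * (1 - exp (- l * (r - 1))) / (1 - exp (- l * (X - 1)))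
      * (l * exp (- l * (s - t - 1)) / (1 - exp (- l * (r - 1))))"
    unfolding cR_def park_dens_def using s t0 by auto
  also have "\<dots> = l * (exp (- l * (t + 1)) * exp (- l * (s - t - 1))) / (1 - exp (- l * (X - 1)))"
  proof -
    have g: "\<And>E1 E2 a b::real. a \<noteq> 0 \<Longrightarrow> E1 * a / b * (l * E2 / a) = l * (E1 * E2) / b" by simp
    have ne: "1 - exp (- l * (r - 1)) \<noteq> 0" using z by linarith
    show ?thesis by (rule g[OF ne])
  qed
  also have "\<dots> = park_dens l X s" unfolding e park_dens_def using s t0 by auto
  finally show ?thesis by simp
qed

lemma densL0: "\<not> (0 < s \<and> s < t - 1) \<Longrightarrow> park_dens l t s = 0"
  unfolding park_dens_def by auto

lemma densR0: "\<not> (t + 1 < s \<and> s < X - 1) \<Longrightarrow> park_dens l r (s - t - 1) = 0"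
  unfolding park_dens_def by auto

lemma densX0: "\<not> (0 < s \<and> s < X - 1) \<Longrightarrow> park_dens l X s = 0"
  unfolding park_dens_def by auto

definition SS :: "real set \<Rightarrow> real set \<Rightarrow> real set" where
  "SS L R = insert t (L \<union> (\<lambda>u. u + (t + 1)) ` R)"

lemma AS_L: "L \<subseteq> {..t-1} \<Longrightarrow> R \<subseteq> {0..} \<Longrightarrow> 0 < s \<Longrightarrow> s < t - 1 \<Longrightarrow> s \<in> AS (SS L R) \<longleftrightarrow> s \<in> AS L"
  unfolding AS_def SS_def by auto

lemma AS_R: "L \<subseteq> {..t-1} \<Longrightarrow> R \<subseteq> {0..} \<Longrightarrow> t + 1 < s \<Longrightarrow> s < X - 1 \<Longrightarrow> s \<in> AS (SS L R) \<longleftrightarrow> s - t - 1 \<in> AS R"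
proof -
  assume a: "L \<subseteq> {..t-1}" "R \<subseteq> {0..}" "t + 1 < s" "s < X - 1"
  have "\<forall>u\<in>L. 1 \<le> \<bar>u - s\<bar>" using a by force
  moreover have "1 \<le> \<bar>t - s\<bar>" using a by auto
  moreover have "(\<forall>u\<in>R. 1 \<le> \<bar>u + (t + 1) - s\<bar>) \<longleftrightarrow> (\<forall>u\<in>R. 1 \<le> \<bar>u - (s - t - 1)\<bar>)"
    by (simp add: algebra_simps)
  ultimately show ?thesis unfolding AS_def SS_def by auto
qed

lemma AS_mid: "t - 1 < s \<Longrightarrow> s < t + 1 \<Longrightarrow> s \<notin> AS (SS L R)"
  unfolding AS_def SS_def by auto

lemma pw:
  assumes "L \<subseteq> {..t-1}" "R \<subseteq> {0..}" "s \<noteq> t - 1" "s \<noteq> t + 1"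
  shows "ennreal (park_dens l X s) * indicator (AS (SS L R)) s =
    ennreal cL * ennreal (park_dens l t s) * indicator (AS L) s + ennreal cR * ennreal (park_dens l r (s - t - 1)) * indicator (AS R) (s - t - 1)"
proof -
  consider "0 < s \<and> s < t - 1" | "t + 1 < s \<and> s < X - 1" | "t - 1 < s \<and> s < t + 1" | "\<not> (0 < s \<and> s < X - 1)"
    using assms by linarith
  then show ?thesis
  proof cases
    case 1
    then have "t > 1" by simp
    then have "0 \<le> cL" using cL_pos by simp
    then show ?thesis using 1 densL[of s] densR0[of s] AS_L[OF assms(1,2), of s] dens_nonneg[OF lpos]
      by (auto simp: indicator_def ennreal_mult)
  next
    case 2
    then have "r > 1" by simp
    then have "0 \<le> cR" using cR_pos by simp
    moreover have "0 < s" using 2 t0 by simp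
    ultimately show ?thesis using 2 t0 densR[of s] densL0[of s] AS_R[OF assms(1,2), of s] dens_nonneg[OF lpos]
      by (auto simp: indicator_def ennreal_mult)
  next
    case 3
    then show ?thesis using AS_mid[of s L R] densL0[of s] densR0[of s] by (auto simp: indicator_def)
  next
    case 4
    have "park_dens l t s = 0" "park_dens l r (s-t-1) = 0" "park_dens l X s = 0"
      using 4 tX t0 by (auto intro!: densL0 densR0 densX0)
    then show ?thesis by simp
  qed
qed

lemma AE_two: "AE s in lborel. s \<noteq> t - 1 \<and> s \<noteq> t + 1"
proof -
  have "AE s in lborel. s \<notin> {t - 1, t + 1}"
    by (intro AE_not_in countable_imp_null_set_lborel) auto
  then show ?thesis by auto
qed

lemma md_split:
  assumes "finite L" "finite R" "L \<subseteq> {..t-1}" "R \<subseteq> {0..}"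
  shows "md l X (AS (SS L R)) = ennreal cL * md l t (AS L) + ennreal cR * md l r (AS R)"
proof -
  have [measurable]: "AS L \<in> sets borel" "AS R \<in> sets borel" using AS_sets assms by auto
  have "md l X (AS (SS L R)) = (\<integral>\<^sup>+ s. ennreal cL * (ennreal (park_dens l t s) * indicator (AS L) s) + ennreal cR * (ennreal (park_dens l r (s - t - 1)) * indicator (AS R) (s - t - 1)) \<partial>lborel)"
    unfolding md_def
    apply (rule nn_integral_cong_AE)
    apply (rule eventually_mono[OF AE_two])
    using pw[OF assms(3,4)] by (simp add: mult.assoc)
  also have "\<dots> = ennreal cL * md l t (AS L) + ennreal cR * (\<integral>\<^sup>+ s. ennreal (park_dens l r (s - t - 1)) * indicator (AS R) (s - t - 1) \<partial>lborel)"
    unfolding md_def by (subst nn_integral_add) (auto simp: nn_integral_cmult)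
  also have "(\<integral>\<^sup>+ s. ennreal (park_dens l r (s - t - 1)) * indicator (AS R) (s - t - 1) \<partial>lborel) = md l r (AS R)"
    unfolding md_def by (rule nn_shift2[where f="\<lambda>u. ennreal (park_dens l r u) * indicator (AS R) u"]) measurable
  finally show ?thesis .
qed

lemma card_SS:
  assumes "finite L" "finite R" "L \<subseteq> {..t-1}" "R \<subseteq> {0..}"
  shows "card (SS L R) = Suc (card L + card R)"
proof -
  have d1: "t \<notin> L \<union> (\<lambda>u. u + (t + 1)) ` R" using assms by auto
  have d2: "L \<inter> (\<lambda>u. u + (t + 1)) ` R = {}" using assms by force
  have "card ((\<lambda>u. u + (t + 1)) ` R) = card R" by (rule card_image) (simp add: inj_on_def)
  then show ?thesis unfolding SS_def using d1 d2 assms by (simp add: card_Un_disjoint)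
qed

lemma SS_sub: "L \<subseteq> {0..t-1} \<Longrightarrow> R \<subseteq> {0..r-1} \<Longrightarrow> SS L R \<subseteq> {0..X-1}"
  unfolding SS_def using t0 tX by auto

lemma good_L: "good X (SS L R) \<Longrightarrow> good t L"
  by (rule good_sub[where c=0]) (auto simp: SS_def)

lemma good_R: "good X (SS L R) \<Longrightarrow> good r R"
proof (rule good_sub[where c="- (t + 1)"])
  show "insert (- 1) (insert r R) \<subseteq> (\<lambda>u. u + - (t + 1)) ` insert (- 1) (insert X (SS L R))"
  proof
    fix u assume "u \<in> insert (- 1) (insert r R)"
    then consider "u = -1" | "u = r" | "u \<in> R" by auto
    then show "u \<in> (\<lambda>u. u + - (t + 1)) ` insert (- 1) (insert X (SS L R))"
    proof cases
      case 1 then show ?thesis by (intro image_eqI[of _ _ t]) (auto simp: SS_def)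
    next
      case 2 then show ?thesis by (intro image_eqI[of _ _ X]) auto
    next
      case 3 then show ?thesis by (intro image_eqI[of _ _ "u + (t + 1)"]) (auto simp: SS_def)
    qed
  qed
qed

lemma insert_SS_L: "insert s (SS L R) = SS (insert s L) R"
  unfolding SS_def by auto

lemma insert_SS_R: "insert s (SS L R) = SS L (insert (s - t - 1) R)"
  unfolding SS_def by auto

lemma AS_notin: "s \<in> AS S \<Longrightarrow> s \<notin> S"
  unfolding AS_def by force

lemma step_AS: "s \<in> AS S \<Longrightarrow> park_step S s = insert s S"
  unfolding AS_def park_step_def by auto

lemma decomp:
  "finite L \<Longrightarrow> finite R \<Longrightarrow> L \<subseteq> {0..t-1} \<Longrightarrow> R \<subseteq> {0..r-1} \<Longrightarrow> sep (SS L R) \<Longrightarrow> good X (SS L R)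
   \<Longrightarrow> HH l X (SS L R) = 1 + hh l t L + hh l r R"
proof (induct "nat \<lfloor>X\<rfloor> - card (SS L R)" arbitrary: L R rule: less_induct)
  case less
  let ?S = "SS L R"
  have fL: "finite L" and fR: "finite R" and subL: "L \<subseteq> {0..t-1}" and subR: "R \<subseteq> {0..r-1}"
    and sepS: "sep ?S" and goodS: "good X ?S" using less.prems by auto
  have hL: "L \<subseteq> {..t-1}" and hR: "R \<subseteq> {0..}" using subL subR by auto
  have fS: "finite ?S" unfolding SS_def using fL fR by auto
  have subS: "?S \<subseteq> {0..X-1}" using SS_sub subL subR by auto
  obtain gL where gLm[measurable]: "gL \<in> borel_measurable borel"
    and gL1: "\<forall>s. s \<in> AS L \<and> 0 < s \<and> s < t - 1 \<longrightarrow> gL s = hh l t (insert s L)"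
    and gL2: "md l t (AS L) * hh l t L = (\<integral>\<^sup>+ s. ennreal (park_dens l t s) * indicator (AS L) s * gL s \<partial>lborel)"
    using hh_rec[OF fL lpos, of t] by blast
  obtain gR where gRm[measurable]: "gR \<in> borel_measurable borel"
    and gR1: "\<forall>s. s \<in> AS R \<and> 0 < s \<and> s < r - 1 \<longrightarrow> gR s = hh l r (insert s R)"
    and gR2: "md l r (AS R) * hh l r R = (\<integral>\<^sup>+ s. ennreal (park_dens l r s) * indicator (AS R) s * gR s \<partial>lborel)"
    using hh_rec[OF fR lpos, of r] by blast
  have [measurable]: "AS L \<in> sets borel" "AS R \<in> sets borel" "AS ?S \<in> sets borel" using AS_sets fL fR fS by auto
  have [measurable]: "Phi l X ?S \<in> borel_measurable borel" using Phi_meas[OF fS X1 lpos] .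
  define G where "G = insert (-1) (insert X ?S)"
  define E where "E = {t - 1, t + 1} \<union> (\<lambda>u. u + 2) ` G \<union> (\<lambda>u. u - 2) ` G"
  have "finite E" unfolding E_def G_def using fS by auto
  then have AE_E: "AE s in lborel. s \<notin> E"
    by (intro AE_not_in countable_imp_null_set_lborel countable_finite)
  have IH: "HH l X (insert s ?S) = 1 + hh l t L' + hh l r R'"
    if s: "s \<in> AS ?S" "0 < s" "s < X - 1" "s \<notin> E" and eq: "insert s ?S = SS L' R'"
      and L': "finite L'" "L' \<subseteq> {0..t-1}" and R': "finite R'" "R' \<subseteq> {0..r-1}" for s L' R'
  proof -
    have g: "good X (insert s ?S)"
      by (rule good_insert[OF goodS]) (use s(4) in \<open>auto simp: E_def G_def\<close>)
    have sp: "sep (insert s ?S)" using sep_insert[OF sepS s(1)] .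
    have sub2: "insert s ?S \<subseteq> {0..X-1}" using subS s by auto
    have "card (insert s ?S) \<le> nat \<lfloor>X\<rfloor>" using sep_card_bound[OF _ sp sub2] fS X1 by auto
    moreover have "card (insert s ?S) = Suc (card ?S)" using AS_notin[OF s(1)] fS by simp
    ultimately have lt: "nat \<lfloor>X\<rfloor> - card (SS L' R') < nat \<lfloor>X\<rfloor> - card ?S" unfolding eq by linarith
    show ?thesis unfolding eq
      by (rule less.hyps[OF lt L'(1) R'(1) L'(2) R'(2)]) (use g sp eq in auto)
  qed
  have key: "AE s in lborel. ennreal (park_dens l X s) * indicator (AS ?S) s * Phi l X ?S s =
      ennreal cL * (ennreal (park_dens l t s) * indicator (AS L) s * (1 + gL s + hh l r R)) +
      ennreal cR * (ennreal (park_dens l r (s - t - 1)) * indicator (AS R) (s - t - 1) * (1 + hh l t L + gR (s - t - 1)))"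
  proof (rule eventually_mono[OF AE_E])
    fix s assume sE: "s \<notin> E"
    then have st: "s \<noteq> t - 1" "s \<noteq> t + 1" unfolding E_def by auto
    have pws: "ennreal (park_dens l X s) * indicator (AS ?S) s =
      ennreal cL * ennreal (park_dens l t s) * indicator (AS L) s + ennreal cR * ennreal (park_dens l r (s - t - 1)) * indicator (AS R) (s - t - 1)"
      using pw[OF hL hR st] .
    consider "0 < s \<and> s < t - 1" | "t + 1 < s \<and> s < X - 1" | "\<not> (0 < s \<and> s < t - 1) \<and> \<not> (t + 1 < s \<and> s < X - 1)" by blast
    then show "ennreal (park_dens l X s) * indicator (AS ?S) s * Phi l X ?S s =
      ennreal cL * (ennreal (park_dens l t s) * indicator (AS L) s * (1 + gL s + hh l r R)) +
      ennreal cR * (ennreal (park_dens l r (s - t - 1)) * indicator (AS R) (s - t - 1) * (1 + hh l t L + gR (s - t - 1)))"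
    proof cases
      case 1
      have r0: "park_dens l r (s - t - 1) = 0" using 1 by (intro densR0) auto
      show ?thesis
      proof (cases "s \<in> AS L")
        case True
        have sS: "s \<in> AS ?S" using AS_L[OF hL hR] 1 True by auto
        have "Phi l X ?S s = HH l X (insert s ?S)" using Phi_step[of s X l ?S] 1 tX step_AS[OF sS] by simp
        also have "\<dots> = 1 + hh l t (insert s L) + hh l r R"
          by (rule IH[OF sS _ _ sE insert_SS_L]) (use 1 tX fL subL fR subR in auto)
        also have "hh l t (insert s L) = gL s" using gL1 True 1 by auto
        finally have "Phi l X ?S s = 1 + gL s + hh l r R" .
        then show ?thesis using pws r0 by (simp add: mult.assoc)
      next
        case False
        then have "s \<notin> AS ?S" using AS_L[OF hL hR] 1 by auto
        then show ?thesis using False r0 by simp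
      qed
    next
      case 2
      have l0: "park_dens l t s = 0" using 2 by (intro densL0) auto
      show ?thesis
      proof (cases "s - t - 1 \<in> AS R")
        case True
        have sS: "s \<in> AS ?S" using AS_R[OF hL hR] 2 True by auto
        have s0: "0 < s" using 2 t0 by simp
        have "Phi l X ?S s = HH l X (insert s ?S)" using Phi_step[of s X l ?S] 2 s0 step_AS[OF sS] by simp
        also have "\<dots> = 1 + hh l t L + hh l r (insert (s - t - 1) R)"
          by (rule IH[OF sS s0 _ sE insert_SS_R]) (use 2 fL subL fR subR in auto)
        also have "hh l r (insert (s - t - 1) R) = gR (s - t - 1)" using gR1 True 2 by auto
        finally have "Phi l X ?S s = 1 + hh l t L + gR (s - t - 1)" .
        then show ?thesis using pws l0 by (simp add: mult.assoc)
      next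
        case False
        then have "s \<notin> AS ?S" using AS_R[OF hL hR] 2 by auto
        then show ?thesis using False l0 by simp
      qed
    next
      case 3
      have "park_dens l t s = 0" "park_dens l r (s - t - 1) = 0" using 3 by (auto intro!: densL0 densR0)
      then show ?thesis using pws by simp
    qed
  qed
  have IL: "(\<integral>\<^sup>+ s. ennreal (park_dens l t s) * indicator (AS L) s * (1 + gL s + hh l r R) \<partial>lborel)
      = md l t (AS L) * (1 + hh l r R) + md l t (AS L) * hh l t L"
  proof -
    have "(\<integral>\<^sup>+ s. ennreal (park_dens l t s) * indicator (AS L) s * (1 + gL s + hh l r R) \<partial>lborel)
      = (\<integral>\<^sup>+ s. ennreal (park_dens l t s) * indicator (AS L) s * (1 + hh l r R) + ennreal (park_dens l t s) * indicator (AS L) s * gL s \<partial>lborel)"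
      by (intro nn_integral_cong) (simp add: algebra_simps)
    also have "\<dots> = (\<integral>\<^sup>+ s. ennreal (park_dens l t s) * indicator (AS L) s * (1 + hh l r R) \<partial>lborel) + (\<integral>\<^sup>+ s. ennreal (park_dens l t s) * indicator (AS L) s * gL s \<partial>lborel)"
      by (rule nn_integral_add) measurable
    also have "(\<integral>\<^sup>+ s. ennreal (park_dens l t s) * indicator (AS L) s * (1 + hh l r R) \<partial>lborel) = md l t (AS L) * (1 + hh l r R)"
      unfolding md_def by (rule nn_integral_multc) measurable
    also have "(\<integral>\<^sup>+ s. ennreal (park_dens l t s) * indicator (AS L) s * gL s \<partial>lborel) = md l t (AS L) * hh l t L"
      using gL2 by simp
    finally show ?thesis .
  qed
  have IR: "(\<integral>\<^sup>+ s. ennreal (park_dens l r (s - t - 1)) * indicator (AS R) (s - t - 1) * (1 + hh l t L + gR (s - t - 1)) \<partial>lborel)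
      = md l r (AS R) * (1 + hh l t L) + md l r (AS R) * hh l r R"
  proof -
    have "(\<integral>\<^sup>+ s. ennreal (park_dens l r (s - t - 1)) * indicator (AS R) (s - t - 1) * (1 + hh l t L + gR (s - t - 1)) \<partial>lborel)
      = (\<integral>\<^sup>+ u. ennreal (park_dens l r u) * indicator (AS R) u * (1 + hh l t L + gR u) \<partial>lborel)"
      by (rule nn_shift2[where f="\<lambda>u. ennreal (park_dens l r u) * indicator (AS R) u * (1 + hh l t L + gR u)"]) measurable
    also have "\<dots> = (\<integral>\<^sup>+ u. ennreal (park_dens l r u) * indicator (AS R) u * (1 + hh l t L) + ennreal (park_dens l r u) * indicator (AS R) u * gR u \<partial>lborel)"
      by (intro nn_integral_cong) (simp add: algebra_simps)
    also have "\<dots> = (\<integral>\<^sup>+ u. ennreal (park_dens l r u) * indicator (AS R) u * (1 + hh l t L) \<partial>lborel) + (\<integral>\<^sup>+ u. ennreal (park_dens l r u) * indicator (AS R) u * gR u \<partial>lborel)"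
      by (rule nn_integral_add) measurable
    also have "(\<integral>\<^sup>+ u. ennreal (park_dens l r u) * indicator (AS R) u * (1 + hh l t L) \<partial>lborel) = md l r (AS R) * (1 + hh l t L)"
      unfolding md_def by (rule nn_integral_multc) measurable
    also have "(\<integral>\<^sup>+ u. ennreal (park_dens l r u) * indicator (AS R) u * gR u \<partial>lborel) = md l r (AS R) * hh l r R"
      using gR2 by simp
    finally show ?thesis .
  qed
  have "md l X (AS ?S) * HH l X ?S = (\<integral>\<^sup>+ s. ennreal (park_dens l X s) * indicator (AS ?S) s * Phi l X ?S s \<partial>lborel)"
    by (rule HH_rec[OF fS X1 lpos])
  also have "\<dots> = (\<integral>\<^sup>+ s. ennreal cL * (ennreal (park_dens l t s) * indicator (AS L) s * (1 + gL s + hh l r R)) +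
      ennreal cR * (ennreal (park_dens l r (s - t - 1)) * indicator (AS R) (s - t - 1) * (1 + hh l t L + gR (s - t - 1))) \<partial>lborel)"
    by (rule nn_integral_cong_AE[OF key])
  also have "\<dots> = ennreal cL * (\<integral>\<^sup>+ s. ennreal (park_dens l t s) * indicator (AS L) s * (1 + gL s + hh l r R) \<partial>lborel) +
      ennreal cR * (\<integral>\<^sup>+ s. ennreal (park_dens l r (s - t - 1)) * indicator (AS R) (s - t - 1) * (1 + hh l t L + gR (s - t - 1)) \<partial>lborel)"
    by (subst nn_integral_add) (auto simp: nn_integral_cmult)
  also have "\<dots> = (ennreal cL * md l t (AS L) + ennreal cR * md l r (AS R)) * (1 + hh l t L + hh l r R)"
    unfolding IL IR by (simp add: algebra_simps)
  also have "\<dots> = md l X (AS ?S) * (1 + hh l t L + hh l r R)"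
    using md_split[OF fL fR hL hR] by simp
  finally have main: "md l X (AS ?S) * HH l X ?S = md l X (AS ?S) * (1 + hh l t L + hh l r R)" .
  show ?case
  proof (cases "md l X (AS ?S) = 0")
    case False
    moreover have "md l X (AS ?S) \<noteq> top" using md_le1[OF X1 lpos, of "AS ?S"] by (auto simp: top_unique)
    ultimately show ?thesis using main by (simp add: ennreal_mult_cancel_left)
  next
    case True
    have HS: "HH l X ?S = ennreal (real (card ?S))" by (rule HH_base[OF fS X1 lpos goodS True])
    have z: "ennreal cL * md l t (AS L) = 0" "ennreal cR * md l r (AS R) = 0"
      using True md_split[OF fL fR hL hR] by auto
    have hhL: "hh l t L = ennreal (real (card L))"
    proof (cases "t \<le> 1")
      case True then show ?thesis unfolding hh_def by simp
    next
      case False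
      then have "ennreal cL \<noteq> 0" using cL_pos by simp
      then have "md l t (AS L) = 0" using z by simp
      then show ?thesis by (rule hh_base[OF fL lpos good_L[OF goodS]])
    qed
    have hhR: "hh l r R = ennreal (real (card R))"
    proof (cases "r \<le> 1")
      case True then show ?thesis unfolding hh_def by simp
    next
      case False
      then have "ennreal cR \<noteq> 0" using cR_pos by simp
      then have "md l r (AS R) = 0" using z by simp
      then show ?thesis by (rule hh_base[OF fR lpos good_R[OF goodS]])
    qed
    show ?thesis unfolding HS hhL hhR card_SS[OF fL fR hL hR]
      by (simp add: ennreal_plus add.assoc)
  qed
qed

end

lemma park_count_CC: "X > 1 \<Longrightarrow> park_count X w = CC X {} w"
  unfolding park_count_def CC_def by (simp add: park_placed_pp)

lemma M_HH:
  assumes "X > 1" "l > 0"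
  shows "park_M l X = enn2real (HH l X {})"
proof -
  have m: "CC X {} \<in> borel_measurable (stream_space (park_cand l X))" using CC_meas[of "{}" "park_cand l X" X] by simp
  have "park_count X = CC X {}" using park_count_CC[OF assms(1)] by (intro ext) simp
  then have "park_M l X = integral\<^sup>L (stream_space (park_cand l X)) (CC X {})"
    unfolding park_M_def using assms by simp
  also have "\<dots> = enn2real (HH l X {})"
    unfolding HH_def by (rule integral_eq_nn_integral[OF m]) (simp add: CC_nonneg)
  finally show ?thesis .
qed

lemma M_nonneg: "l > 0 \<Longrightarrow> 0 \<le> park_M l u"
proof (cases "u \<le> 1")
  case True then show ?thesis unfolding park_M_def by simp
next
  case False
  assume "l > 0"
  then show ?thesis using M_HH[of u l] False by simp
qed

lemma hh_M:
  assumes "l > 0"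
  shows "hh l u {} = ennreal (park_M l u)"
proof (cases "u \<le> 1")
  case True then show ?thesis unfolding hh_def park_M_def by simp
next
  case False
  then have "HH l u {} < \<infinity>" using HH_fin[of "{}" u l] assms by simp
  then show ?thesis unfolding hh_def using False M_HH[of u l] assms by simp
qed

lemma good_single:
  assumes "x > 0" "s \<noteq> 1" "s \<noteq> x - 1" "0 < s" "s < x"
  shows "good (x + 1) {s}"
  using assms unfolding good_def by auto


lemma Phi_single:
  assumes "x > 0" "l > 0" "0 < s" "s < x" "s \<noteq> 1" "s \<noteq> x - 1"
  shows "Phi l (x + 1) {} s = ennreal (1 + park_M l s + park_M l (x - s))"
proof -
  have "Phi l (x + 1) {} s = HH l (x + 1) {s}"
    using Phi_step[of s "x + 1" l "{}"] assms by (simp add: park_step_def)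
  also have "{s} = SS s {} {}" using SS_def[of l "x+1" s "{}" "{}"] assms by simp
  also have "HH l (x + 1) (SS s {} {}) = 1 + hh l s {} + hh l (x + 1 - 1 - s) {}"
    by (rule decomp) (use assms good_single[OF assms(1,5,6,3,4)] \<open>{s} = SS s {} {}\<close>[symmetric] in \<open>auto simp: sep_def\<close>)
  also have "\<dots> = ennreal (1 + park_M l s + park_M l (x - s))"
    using hh_M[OF assms(2)] M_nonneg[OF assms(2)] by (simp add: ennreal_plus)
  finally show ?thesis .
qed

theorem mainTheorem1:
  fixes l :: real
  assumes "l > 0"
  shows "(\<forall>x. 0 \<le> x \<and> x \<le> 1 \<longrightarrow> park_M l x = 0) \<and>
         (\<forall>x > 0. park_M l (x + 1) =
            integral {0..x} (\<lambda>t. l * exp (- l * t) / (1 - exp (- l * x)) *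
                                  (park_M l t + park_M l (x - t))) + 1)"
proof (intro conjI allI impI)
  fix x :: real assume "0 \<le> x \<and> x \<le> 1"
  then show "park_M l x = 0" by (simp add: park_M_def)
next
  fix x :: real assume x: "x > 0"
  have X1: "x + 1 > 1" using x by simp
  define G where "G s = enn2real (Phi l (x + 1) {} s)" for s
  define q where "q s = l * exp (- l * s) / (1 - exp (- l * x))" for s
  define F where "F = (\<lambda>t. l * exp (- l * t) / (1 - exp (- l * x)) * (park_M l t + park_M l (x - t)))"
  have Gm[measurable]: "G \<in> borel_measurable borel"
    unfolding G_def[abs_def] using Phi_meas[of "{}" "x + 1" l] X1 assms by measurable
  have pq: "\<And>s. 0 < s \<Longrightarrow> s < x \<Longrightarrow> park_dens l (x + 1) s = q s"
    unfolding park_dens_def q_def by simp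
  have p0: "\<And>s. \<not> (0 < s \<and> s < x) \<Longrightarrow> park_dens l (x + 1) s = 0"
    unfolding park_dens_def by auto
  have Gnn: "\<And>s. 0 \<le> G s" unfolding G_def by simp
  have GM: "\<And>s. 0 < s \<Longrightarrow> s < x \<Longrightarrow> s \<noteq> 1 \<Longrightarrow> s \<noteq> x - 1 \<Longrightarrow>
      Phi l (x + 1) {} s = ennreal (G s) \<and> G s = 1 + park_M l s + park_M l (x - s)"
  proof -
    fix s assume s: "0 < s" "s < x" "s \<noteq> 1" "s \<noteq> x - 1"
    have e: "Phi l (x + 1) {} s = ennreal (1 + park_M l s + park_M l (x - s))"
      by (rule Phi_single[OF x assms s])
    have "0 \<le> 1 + park_M l s + park_M l (x - s)" using M_nonneg[OF assms] by (simp add: add_nonneg_nonneg)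
    then show "Phi l (x + 1) {} s = ennreal (G s) \<and> G s = 1 + park_M l s + park_M l (x - s)"
      unfolding G_def e by simp
  qed
  have AE2: "AE s in lborel. s \<notin> {1, x - 1}"
    by (intro AE_not_in countable_imp_null_set_lborel) auto
  have HHe: "HH l (x + 1) {} = (\<integral>\<^sup>+ s. ennreal (park_dens l (x + 1) s * G s) \<partial>lborel)"
  proof -
    have "HH l (x + 1) {} = (\<integral>\<^sup>+ s. ennreal (park_dens l (x + 1) s) * Phi l (x + 1) {} s \<partial>lborel)"
      by (rule HH_Phi) (use X1 assms in auto)
    also have "\<dots> = (\<integral>\<^sup>+ s. ennreal (park_dens l (x + 1) s * G s) \<partial>lborel)"
    proof (rule nn_integral_cong_AE[OF eventually_mono[OF AE2]])
      fix s :: real assume s: "s \<notin> {1, x - 1}"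
      show "ennreal (park_dens l (x + 1) s) * Phi l (x + 1) {} s = ennreal (park_dens l (x + 1) s * G s)"
      proof (cases "0 < s \<and> s < x")
        case True
        then show ?thesis using GM[of s] s dens_nonneg[OF assms, of "x + 1" s] Gnn[of s]
          by (simp add: ennreal_mult)
      next
        case False
        then show ?thesis using p0 by simp
      qed
    qed
    finally show ?thesis .
  qed
  have fin: "HH l (x + 1) {} < \<infinity>" using HH_fin[of "{}" "x + 1" l] X1 assms by simp
  have nnm: "(\<lambda>s. park_dens l (x + 1) s * G s) \<in> borel_measurable borel" by measurable
  have nonneg: "\<And>s. 0 \<le> park_dens l (x + 1) s * G s" using dens_nonneg[OF assms] Gnn by (simp add: mult_nonneg_nonneg)
  have int: "integrable lborel (\<lambda>s. park_dens l (x + 1) s * G s)"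
    by (rule integrableI_nonneg) (use nnm nonneg HHe fin in auto)
  have I: "integral\<^sup>L lborel (\<lambda>s. park_dens l (x + 1) s * G s) = park_M l (x + 1)"
    using integral_eq_nn_integral[of "\<lambda>s. park_dens l (x + 1) s * G s" lborel] nnm nonneg HHe M_HH[OF X1 assms] by simp
  have h1: "((\<lambda>s. park_dens l (x + 1) s * G s) has_integral park_M l (x + 1)) UNIV"
    using has_integral_integral_lborel[OF int] I by simp
  have "(\<lambda>s. if s \<in> {0..x} then park_dens l (x + 1) s * G s else 0) = (\<lambda>s. park_dens l (x + 1) s * G s)"
    using p0 by (intro ext) auto
  then have h2: "((\<lambda>s. park_dens l (x + 1) s * G s) has_integral park_M l (x + 1)) {0..x}"
    using h1 has_integral_restrict_UNIV[of "{0..x}" "\<lambda>s. park_dens l (x + 1) s * G s"] by simp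
  have h3: "(q has_integral 1) {0..x}" unfolding q_def[abs_def] by (rule q_int[OF x assms])
  have h4: "((\<lambda>s. park_dens l (x + 1) s * G s - q s) has_integral (park_M l (x + 1) - 1)) {0..x}"
    by (rule has_integral_diff[OF h2 h3])
  have h5: "(F has_integral (park_M l (x + 1) - 1)) {0..x}"
  proof (rule has_integral_spike_finite[OF _ _ h4])
    show "finite {0, 1, x - 1, x}" by simp
    fix s assume s: "s \<in> {0..x} - {0, 1, x - 1, x}"
    then have s': "0 < s" "s < x" "s \<noteq> 1" "s \<noteq> x - 1" by auto
    have "park_dens l (x + 1) s * G s - q s = q s * (1 + park_M l s + park_M l (x - s)) - q s"
      using pq[OF s'(1,2)] GM[OF s'] by simp
    also have "\<dots> = q s * (park_M l s + park_M l (x - s))" by (simp add: algebra_simps)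
    also have "\<dots> = F s" unfolding F_def q_def by simp
    finally show "F s = park_dens l (x + 1) s * G s - q s" by simp
  qed
  then have "integral {0..x} F = park_M l (x + 1) - 1" by (rule integral_unique)
  then show "park_M l (x + 1) =
            integral {0..x} (\<lambda>t. l * exp (- l * t) / (1 - exp (- l * x)) *
                                  (park_M l t + park_M l (x - t))) + 1"
    unfolding F_def by simp
qed

end
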